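(* Consider the disclosure model described in the context with a fixed, commonly known type $\theta\in\Theta$ (no information asymmetry). Let $\underline{\mathbf{e}}(\theta):=\min\{e\in E:\pi(\theta,e)\ge\pi(\theta,\bar e)\}$. An emission level $e^*\in E$ can be implemented (i.e., there exists $d\in\mathcal{D}$ such that $e^*$ is belief-compatible under $d$ and maximizes $\pi(\theta,\cdot)$ over $\tilde E_d$) if and only if $e^*\ge\underline{\mathbf{e}}(\theta)$. Moreover, any such $e^*$ is implemented by the binary disclosure policy \[d(e)=\begin{cases}e^*,& e\le e^*,\\ \bar e,& e>e^*.\end{cases}\]
   Context: Emissions lie in $E=[0,\bar e]\subset\mathbb{R}_+$ with $\bar e>0$; types lie in $\Theta=[\underline\theta,\bar\theta]$. The firm's profit is $\tilde\pi(\theta,e,\tilde e)$, where $e$ is the actual emission and $\tilde e\in E$ the emission perceived by the market; for each $\theta$ it is strictly increasing in $e$ and strictly decreasing in $\tilde e$. Standing assumptions: $\tilde\pi$ is continuous on $\Theta\times E\times E$ and $C^2$ on its interior; $\pi(\theta,e):=\tilde\pi(\theta,e,e)$ is strictly concave in $e$ for each $\theta$; and $\pi(\theta,0)<\pi(\theta,\bar e)$ for all $\theta$. A disclosure policy is a function $d:E\to E$ (the partition of $E$ into its level sets). An emission level $e$ is belief-compatible under $d$ if $e\ge e'$ for all $e'$ with $d(e')=d(e)$. Let $\tilde E_d$ be the set of belief-compatible levels. The firm of type $\theta$ effectively chooses $e\in\tilde E_d$ to maximize $\pi(\theta,e)$, because the market believes the firm chose the highest emission consistent with the disclosure. $\mathcal{D}$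 is the set of policies for which this maximum is attained for every type. *)

theory Defs
  imports "HOL-Analysis.Analysis"
begin

definition strictly_concave_on :: "real set \<Rightarrow> (real \<Rightarrow> real) \<Rightarrow> bool" where
  "strictly_concave_on S f \<longleftrightarrow> convex S \<and>
     (\<forall>x\<in>S. \<forall>y\<in>S. x \<noteq> y \<longrightarrow> (\<forall>t. 0 < t \<and> t < 1 \<longrightarrow>
        f (t * x + (1 - t) * y) > t * f x + (1 - t) * f y))"

definition C2_on :: "'a::real_normed_vector set \<Rightarrow> ('a \<Rightarrow> real) \<Rightarrow> bool" where
  "C2_on S f \<longleftrightarrow> (\<exists>D D2.
     (\<forall>x\<in>S. (f has_derivative blinfun_apply (D x)) (at x)) \<and>
     (\<forall>x\<in>S. (D has_derivative blinfun_apply (D2 x)) (at x)) \<and>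
     continuous_on S D \<and> continuous_on S D2)"

abbreviation Eset :: "real \<Rightarrow> real set" where
  "Eset ebar \<equiv> {0..ebar}"

definition profit :: "(real \<Rightarrow> real \<Rightarrow> real \<Rightarrow> real) \<Rightarrow> real \<Rightarrow> real \<Rightarrow> real" where
  "profit pit \<theta> e = pit \<theta> e e"

definition disclosure_policy :: "real \<Rightarrow> (real \<Rightarrow> real) \<Rightarrow> bool" where
  "disclosure_policy ebar d \<longleftrightarrow> (\<forall>e\<in>Eset ebar. d e \<in> Eset ebar)"

definition belief_compatible :: "real \<Rightarrow> (real \<Rightarrow> real) \<Rightarrow> real \<Rightarrow> bool" where
  "belief_compatible ebar d e \<longleftrightarrow> e \<in> Eset ebar \<and>
     (\<forall>e'\<in>Eset ebar. d e' = d e \<longrightarrow> e' \<le> e)"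

definition bc_set :: "real \<Rightarrow> (real \<Rightarrow> real) \<Rightarrow> real set" where
  "bc_set ebar d = {e. belief_compatible ebar d e}"

definition policy_class :: "(real \<Rightarrow> real \<Rightarrow> real \<Rightarrow> real) \<Rightarrow> real set \<Rightarrow> real \<Rightarrow> (real \<Rightarrow> real) set" where
  "policy_class pit Theta ebar = {d. disclosure_policy ebar d \<and>
     (\<forall>\<theta>\<in>Theta. \<exists>e\<in>bc_set ebar d. \<forall>e'\<in>bc_set ebar d. profit pit \<theta> e' \<le> profit pit \<theta> e)}"

definition implements :: "(real \<Rightarrow> real \<Rightarrow> real \<Rightarrow> real) \<Rightarrow> real set \<Rightarrow> real \<Rightarrow> real \<Rightarrow> (real \<Rightarrow> real) \<Rightarrow> real \<Rightarrow> bool" where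
  "implements pit Theta ebar \<theta> d estar \<longleftrightarrow> d \<in> policy_class pit Theta ebar \<and>
     estar \<in> bc_set ebar d \<and> (\<forall>e\<in>bc_set ebar d. profit pit \<theta> e \<le> profit pit \<theta> estar)"

definition implementable :: "(real \<Rightarrow> real \<Rightarrow> real \<Rightarrow> real) \<Rightarrow> real set \<Rightarrow> real \<Rightarrow> real \<Rightarrow> real \<Rightarrow> bool" where
  "implementable pit Theta ebar \<theta> estar \<longleftrightarrow> (\<exists>d. implements pit Theta ebar \<theta> d estar)"

definition e_low :: "(real \<Rightarrow> real \<Rightarrow> real \<Rightarrow> real) \<Rightarrow> real \<Rightarrow> real \<Rightarrow> real" where
  "e_low pit ebar \<theta> = (LEAST e. e \<in> Eset ebar \<and> profit pit \<theta> e \<ge> profit pit \<theta> ebar)"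

definition binary_policy :: "real \<Rightarrow> real \<Rightarrow> real \<Rightarrow> real" where
  "binary_policy ebar estar e = (if e \<le> estar then estar else ebar)"

end

theory Submission
  imports Defs
begin

theorem proposition1:
  fixes pit :: "real \<Rightarrow> real \<Rightarrow> real \<Rightarrow> real"
    and \<theta>l \<theta>h ebar \<theta> estar :: real
  assumes ebar_pos: "ebar > 0"
    and cont: "continuous_on ({\<theta>l..\<theta>h} \<times> Eset ebar \<times> Eset ebar) (\<lambda>(t, e, et). pit t e et)"
    and C2: "C2_on (interior ({\<theta>l..\<theta>h} \<times> Eset ebar \<times> Eset ebar)) (\<lambda>(t, e, et). pit t e et)"
    and incr: "\<And>t et. t \<in> {\<theta>l..\<theta>h} \<Longrightarrow> et \<in> Eset ebar \<Longrightarrow>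
                 strict_mono_on (Eset ebar) (\<lambda>e. pit t e et)"
    and decr: "\<And>t e. t \<in> {\<theta>l..\<theta>h} \<Longrightarrow> e \<in> Eset ebar \<Longrightarrow>
                 strict_antimono_on (Eset ebar) (\<lambda>et. pit t e et)"
    and conc: "\<And>t. t \<in> {\<theta>l..\<theta>h} \<Longrightarrow> strictly_concave_on (Eset ebar) (profit pit t)"
    and ends: "\<And>t. t \<in> {\<theta>l..\<theta>h} \<Longrightarrow> profit pit t 0 < profit pit t ebar"
    and theta: "\<theta> \<in> {\<theta>l..\<theta>h}"
    and estar: "estar \<in> Eset ebar"
  shows "(implementable pit {\<theta>l..\<theta>h} ebar \<theta> estar \<longleftrightarrow> e_low pit ebar \<theta> \<le> estar)
       \<and> (e_low pit ebar \<theta> \<le> estar \<longrightarrow>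
            implements pit {\<theta>l..\<theta>h} ebar \<theta> (binary_policy ebar estar) estar)"
proof -
  let ?f = "profit pit \<theta>"
  define S where "S = {0..ebar} \<inter> ?f -` {?f ebar..}"
  have fc: "continuous_on {0..ebar} ?f"
  proof -
    have "continuous_on {0..ebar} (\<lambda>e. (\<lambda>(t, e, et). pit t e et) (\<theta>, e, e))"
      by (rule continuous_on_compose2[OF cont]) (use theta in \<open>auto intro!: continuous_intros\<close>)
    then show ?thesis by (simp add: profit_def[abs_def])
  qed
  have Scl: "closed S" unfolding S_def
    by (rule continuous_closed_preimage[OF fc]) auto
  have ebS: "ebar \<in> S" using ebar_pos by (auto simp: S_def)
  have bdd: "bdd_below S" unfolding S_def by (rule bdd_belowI[of _ 0]) auto
  define m where "m = Inf S"
  have mS: "m \<in> S" unfolding m_def using closed_contains_Inf[OF _ bdd Scl] ebS by blast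
  have mle: "\<And>y. y \<in> S \<Longrightarrow> m \<le> y" unfolding m_def by (rule cInf_lower[OF _ bdd])
  have elow: "e_low pit ebar \<theta> = m"
    unfolding e_low_def
    by (rule Least_equality) (use mS mle in \<open>auto simp: S_def\<close>)
  have ebc: "\<And>d. ebar \<in> bc_set ebar d"
    using ebar_pos by (auto simp: bc_set_def belief_compatible_def)
  have part2: "implements pit {\<theta>l..\<theta>h} ebar \<theta> (binary_policy ebar estar) estar"
    if le: "m \<le> estar"
  proof -
    let ?d = "binary_policy ebar estar"
    have esb: "estar \<in> bc_set ebar ?d"
      using estar by (auto simp: bc_set_def belief_compatible_def binary_policy_def split: if_splits)
    have sub: "bc_set ebar ?d \<subseteq> {estar, ebar}"
    proof
      fix e assume e: "e \<in> bc_set ebar ?d"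
      show "e \<in> {estar, ebar}"
      proof (cases "e \<le> estar")
        case True
        then have "estar \<le> e" using e estar
          by (auto simp: bc_set_def belief_compatible_def binary_policy_def)
        then show ?thesis using True by auto
      next
        case False
        then have "ebar \<le> e" using e estar
          by (auto simp: bc_set_def belief_compatible_def binary_policy_def split: if_splits)
        then show ?thesis using e by (auto simp: bc_set_def belief_compatible_def)
      qed
    qed
    have pe: "?f ebar \<le> ?f estar"
    proof (cases "estar = m \<or> estar = ebar")
      case True then show ?thesis using mS by (auto simp: S_def)
    next
      case False
      then have ne: "m \<noteq> ebar" and lt: "m < estar" "estar < ebar" using le estar by auto
      define t where "t = (ebar - estar) / (ebar - m)"
      have m0: "m \<ge> 0" "m \<le> ebar" using mS by (auto simp: S_def)
      have t01: "0 < t" "t < 1" using lt unfolding t_def by (auto simp: field_simps)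
      have "t * (ebar - m) = ebar - estar" using lt unfolding t_def by auto
      then have eq: "t * m + (1 - t) * ebar = estar"
        by (simp add: algebra_simps)
      have "?f (t * m + (1 - t) * ebar) > t * ?f m + (1 - t) * ?f ebar"
        using conc[OF theta] m0 ne t01 ebar_pos unfolding strictly_concave_on_def by auto
      moreover have "t * ?f m + (1 - t) * ?f ebar \<ge> t * ?f ebar + (1 - t) * ?f ebar"
        using mS t01 by (auto simp: S_def)
      ultimately show ?thesis using eq by (auto simp: algebra_simps)
    qed
    have pc: "?d \<in> policy_class pit {\<theta>l..\<theta>h} ebar"
      unfolding policy_class_def
    proof (intro CollectI conjI ballI)
      show "disclosure_policy ebar ?d"
        using estar ebar_pos by (auto simp: disclosure_policy_def binary_policy_def)
    next
      fix th assume "th \<in> {\<theta>l..\<theta>h}"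
      show "\<exists>e\<in>bc_set ebar ?d. \<forall>e'\<in>bc_set ebar ?d. profit pit th e' \<le> profit pit th e"
      proof (cases "profit pit th ebar \<le> profit pit th estar")
        case True then show ?thesis using esb sub by (intro bexI[of _ estar]) auto
      next
        case False then show ?thesis using ebc sub by (intro bexI[of _ ebar]) auto
      qed
    qed
    show ?thesis unfolding implements_def using pc esb sub pe by auto
  qed
  have part1: "m \<le> estar" if imp: "implementable pit {\<theta>l..\<theta>h} ebar \<theta> estar"
  proof -
    obtain d where d: "implements pit {\<theta>l..\<theta>h} ebar \<theta> d estar"
      using imp unfolding implementable_def by blast
    then have "?f ebar \<le> ?f estar" using ebc unfolding implements_def by blast
    then have "estar \<in> S" using estar by (auto simp: S_def)
    then show ?thesis by (rule mle)
  qed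
  show ?thesis using part1 part2 unfolding elow implementable_def by blast
qed

end
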